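(* Let $L$ be a finite simplicial complex, $H\subseteq L$ a hypergraph, and $k\geq 1$, with $\mathrm{Ext}=\Delta\gamma\delta\gamma$ and $\mathrm{Int}=\delta\gamma\Delta\gamma$. (a) If $H\neq\emptyset$, then $\max(L)\cap\mathrm{Ext}^k(H)$ equals the set of all simplices occurring in some broad path $\tau_1\cdots\tau_k$ of length $k$ in $L$ for which there is $\sigma\in H$ with $\sigma\subseteq\tau_1$. (b) If $H\neq L$, then $\gamma\,\mathrm{Int}^k(H)$ equals the set of all simplices occurring in some path $\tau'_1\cdots\tau'_k$ of length $k$ in $L$ for which there is $\sigma'\in\gamma H$ with $\tau'_1\cap\sigma'\neq\emptyset$.
   Context: $L$ is a finite collection of nonempty sets closed under nonempty subsets; a hypergraph in $L$ is any subset of $L$. Operators on subsets $H\subseteq L$: $\Delta H=\{\sigma\in L:\exists\tau\in H,\sigma\subseteq\tau\}$, $\delta H=\{\sigma\in L:\text{every nonempty }\tau\subseteq\sigma\text{ lies in }H\}$, $\gamma H=L\setminus H$. $\max(L)$ is the set of maximal faces of $L$. A path is a sequence $\tau_1\cdots\tau_m$ of simplices of $L$ with $\tau_i\cap\tau_{i+1}\neq\emptyset$; its length is $m$. A broad path is a path consisting of maximal faces of $L$. *)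

theory Defs
  imports Main
begin

definition simplicial_complex :: "'a set set \<Rightarrow> bool" where
  "simplicial_complex L \<longleftrightarrow> finite L \<and> (\<forall>\<sigma>\<in>L. \<sigma> \<noteq> {}) \<and>
     (\<forall>\<sigma>\<in>L. \<forall>\<tau>. \<tau> \<noteq> {} \<and> \<tau> \<subseteq> \<sigma> \<longrightarrow> \<tau> \<in> L)"

definition Delta_op :: "'a set set \<Rightarrow> 'a set set \<Rightarrow> 'a set set" where
  "Delta_op L H = {\<sigma>\<in>L. \<exists>\<tau>\<in>H. \<sigma> \<subseteq> \<tau>}"

definition delta_op :: "'a set set \<Rightarrow> 'a set set \<Rightarrow> 'a set set" where
  "delta_op L H = {\<sigma>\<in>L. \<forall>\<tau>. \<tau> \<noteq> {} \<and> \<tau> \<subseteq> \<sigma> \<longrightarrow> \<tau> \<in> H}"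

definition gamma_op :: "'a set set \<Rightarrow> 'a set set \<Rightarrow> 'a set set" where
  "gamma_op L H = L - H"

definition Ext_op :: "'a set set \<Rightarrow> 'a set set \<Rightarrow> 'a set set" where
  "Ext_op L = Delta_op L \<circ> gamma_op L \<circ> delta_op L \<circ> gamma_op L"

definition Int_op :: "'a set set \<Rightarrow> 'a set set \<Rightarrow> 'a set set" where
  "Int_op L = delta_op L \<circ> gamma_op L \<circ> Delta_op L \<circ> gamma_op L"

definition max_faces :: "'a set set \<Rightarrow> 'a set set" where
  "max_faces L = {\<sigma>\<in>L. \<forall>\<tau>\<in>L. \<sigma> \<subseteq> \<tau> \<longrightarrow> \<tau> = \<sigma>}"

definition is_path :: "'a set set \<Rightarrow> 'a set list \<Rightarrow> bool" where
  "is_path L p \<longleftrightarrow> p \<noteq> [] \<and> set p \<subseteq> L \<and>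
     (\<forall>i. Suc i < length p \<longrightarrow> p ! i \<inter> p ! Suc i \<noteq> {})"

definition is_broad_path :: "'a set set \<Rightarrow> 'a set list \<Rightarrow> bool" where
  "is_broad_path L p \<longleftrightarrow> is_path L p \<and> set p \<subseteq> max_faces L"

end

theory Submission
  imports Defs
begin

definition chain :: "'a set set \<Rightarrow> 'a set list \<Rightarrow> bool" where
  "chain A p \<longleftrightarrow> p \<noteq> [] \<and> set p \<subseteq> A \<and>
     (\<forall>i. Suc i < length p \<longrightarrow> p ! i \<inter> p ! Suc i \<noteq> {})"

definition E :: "'a set set \<Rightarrow> ('a set \<Rightarrow> bool) \<Rightarrow> nat \<Rightarrow> 'a set set" where
  "E A S k = {last p | p. chain A p \<and> length p = k \<and> S (hd p)}"

lemma E_memI: "chain A p \<Longrightarrow> length p = k \<Longrightarrow> S (hd p) \<Longrightarrow> last p \<in> E A S k"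
  unfolding E_def by blast

lemma E_memE: "\<tau> \<in> E A S k \<Longrightarrow> (\<And>p. chain A p \<Longrightarrow> length p = k \<Longrightarrow> S (hd p) \<Longrightarrow> \<tau> = last p \<Longrightarrow> P) \<Longrightarrow> P"
  unfolding E_def by blast

lemma chain_snoc:
  assumes "p \<noteq> []"
  shows "chain A (p @ [x]) \<longleftrightarrow> chain A p \<and> x \<in> A \<and> last p \<inter> x \<noteq> {}"
proof
  assume c: "chain A (p @ [x])"
  have "chain A p" unfolding chain_def using assms c
    by (auto simp: chain_def) (metis Suc_lessD less_SucI length_append_singleton nth_append)
  moreover have "last p \<inter> x \<noteq> {}"
  proof -
    have "Suc (length p - 1) < length (p @ [x])" using assms by simp
    then have "(p@[x]) ! (length p - 1) \<inter> (p@[x]) ! Suc (length p - 1) \<noteq> {}"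
      using c unfolding chain_def by blast
    then show ?thesis using assms by (simp add: nth_append last_conv_nth)
  qed
  ultimately show "chain A p \<and> x \<in> A \<and> last p \<inter> x \<noteq> {}" using c by (auto simp: chain_def)
next
  assume h: "chain A p \<and> x \<in> A \<and> last p \<inter> x \<noteq> {}"
  show "chain A (p @ [x])" unfolding chain_def
  proof (intro conjI allI impI)
    show "p @ [x] \<noteq> []" by simp
    show "set (p @ [x]) \<subseteq> A" using h by (auto simp: chain_def)
    fix i assume i: "Suc i < length (p @ [x])"
    show "(p @ [x]) ! i \<inter> (p @ [x]) ! Suc i \<noteq> {}"
    proof (cases "Suc i < length p")
      case True
      then show ?thesis using h by (simp add: nth_append chain_def)
    next
      case False
      then have "i = length p - 1" "Suc i = length p" using i assms by auto
      then show ?thesis using h assms by (simp add: nth_append last_conv_nth)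
    qed
  qed
qed

lemma E_one: "E A S (Suc 0) = {\<tau>\<in>A. S \<tau>}"
proof -
  have "\<And>p. length p = Suc 0 \<longleftrightarrow> (\<exists>x. p = [x])" by (simp add: length_Suc_conv)
  show ?thesis
  proof (intro set_eqI iffI)
    fix \<tau> assume "\<tau> \<in> E A S (Suc 0)"
    then obtain p where p: "chain A p" "length p = Suc 0" "S (hd p)" "\<tau> = last p"
      by (rule E_memE)
    then obtain x where "p = [x]" by (auto simp: length_Suc_conv)
    then show "\<tau> \<in> {\<tau>\<in>A. S \<tau>}" using p by (simp add: chain_def)
  next
    fix \<tau> assume t: "\<tau> \<in> {\<tau>\<in>A. S \<tau>}"
    have "chain A [\<tau>]" using t by (simp add: chain_def)
    then have "\<tau> = last [\<tau>] \<and> chain A [\<tau>] \<and> length [\<tau>] = Suc 0 \<and> S (hd [\<tau>])" using t by simp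
    then show "\<tau> \<in> E A S (Suc 0)" using E_memI[of A "[\<tau>]" "Suc 0" S] by simp
  qed
qed

lemma E_step: "E A S (Suc (Suc n)) = {\<tau>\<in>A. \<exists>\<mu>\<in>E A S (Suc n). \<mu> \<inter> \<tau> \<noteq> {}}"
proof (intro set_eqI iffI)
  fix \<tau> assume "\<tau> \<in> E A S (Suc (Suc n))"
  then obtain q where q: "chain A q" "length q = Suc (Suc n)" "S (hd q)" "\<tau> = last q"
    by (rule E_memE)
  define p where "p = butlast q"
  have lp: "length p = Suc n" using q(2) p_def by simp
  then have pne: "p \<noteq> []" by auto
  have qeq: "q = p @ [\<tau>]" using q(2,4) p_def
    by (metis append_butlast_last_id list.size(3) nat.distinct(1))
  have "chain A p \<and> \<tau> \<in> A \<and> last p \<inter> \<tau> \<noteq> {}" using chain_snoc[OF pne] q(1) qeq by simp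
  moreover note lp
  moreover have "hd p = hd q" using qeq pne by simp
  ultimately have "last p \<in> E A S (Suc n)" "\<tau> \<in> A" "last p \<inter> \<tau> \<noteq> {}"
    using E_memI[of A p "Suc n" S] q(3) by auto
  then show "\<tau> \<in> {\<tau>\<in>A. \<exists>\<mu>\<in>E A S (Suc n). \<mu> \<inter> \<tau> \<noteq> {}}" by blast
next
  fix \<tau> assume "\<tau> \<in> {\<tau>\<in>A. \<exists>\<mu>\<in>E A S (Suc n). \<mu> \<inter> \<tau> \<noteq> {}}"
  then obtain \<mu> where m: "\<tau> \<in> A" "\<mu> \<in> E A S (Suc n)" "\<mu> \<inter> \<tau> \<noteq> {}" by blast
  from m(2) obtain p where p0: "chain A p" "length p = Suc n" "S (hd p)" "\<mu> = last p"
    by (rule E_memE)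
  have p: "\<tau> \<in> A" "chain A p" "length p = Suc n" "S (hd p)" "last p \<inter> \<tau> \<noteq> {}"
    using m p0 by auto
  have pne: "p \<noteq> []" using p(3) by auto
  have "chain A (p @ [\<tau>])" using chain_snoc[OF pne] p by simp
  moreover have "hd (p @ [\<tau>]) = hd p" using pne by simp
  ultimately have "last (p @ [\<tau>]) \<in> E A S (Suc (Suc n))" using E_memI p by (metis length_append_singleton)
  then show "\<tau> \<in> E A S (Suc (Suc n))" by simp
qed

lemma E_mono_Suc:
  assumes ne: "\<forall>x\<in>A. x \<noteq> {}" and k: "k \<ge> 1"
  shows "E A S k \<subseteq> E A S (Suc k)"
proof
  fix \<tau> assume "\<tau> \<in> E A S k"
  then obtain p where p: "chain A p" "length p = k" "S (hd p)" "\<tau> = last p"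
    by (rule E_memE)
  have pne: "p \<noteq> []" using p(1) by (simp add: chain_def)
  have "last p \<in> A" using p(1) pne by (auto simp: chain_def)
  then have "chain A (p @ [last p])" using chain_snoc[OF pne] p ne by auto
  moreover have "hd (p @ [last p]) = hd p" using pne by simp
  moreover have "length (p @ [last p]) = Suc k" "\<tau> = last (p @ [last p])" using p by auto
  ultimately show "\<tau> \<in> E A S (Suc k)" using p(3) E_memI[of A "p @ [last p]" "Suc k" S] by simp
qed

lemma E_mono:
  assumes ne: "\<forall>x\<in>A. x \<noteq> {}" and "1 \<le> j" "j \<le> k"
  shows "E A S j \<subseteq> E A S k"
  using assms(3)
proof (induction k rule: dec_induct)
  case base then show ?case by simp
next
  case (step m) then show ?case using E_mono_Suc[OF ne, of m S] assms(2) by auto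
qed

lemma E_set:
  assumes ne: "\<forall>x\<in>A. x \<noteq> {}"
  shows "{\<tau>. \<exists>p. chain A p \<and> length p = k \<and> S (hd p) \<and> \<tau> \<in> set p} = E A S k"
proof (intro set_eqI iffI)
  fix \<tau> assume "\<tau> \<in> {\<tau>. \<exists>p. chain A p \<and> length p = k \<and> S (hd p) \<and> \<tau> \<in> set p}"
  then obtain p where p: "chain A p" "length p = k" "S (hd p)" "\<tau> \<in> set p" by blast
  then obtain i where i: "i < k" "p ! i = \<tau>" by (metis in_set_conv_nth)
  define q where "q = take (Suc i) p"
  have qeq: "q = take i p @ [\<tau>]" using i p(2) q_def by (simp add: take_Suc_conv_app_nth)
  have "chain A q" using p(1) i p(2) unfolding chain_def q_def
    by (auto dest: in_set_takeD)
  moreover have "hd q = hd p" using q_def p(1) by (simp add: chain_def hd_take)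
  moreover have "length q = Suc i" using q_def i p(2) by simp
  ultimately have "last q \<in> E A S (Suc i)" using p(3) E_memI[of A q "Suc i" S] by simp
  then have "\<tau> \<in> E A S (Suc i)" using qeq by simp
  then show "\<tau> \<in> E A S k" using E_mono[OF ne, of "Suc i" k S] i by auto
next
  fix \<tau> assume "\<tau> \<in> E A S k"
  then obtain p where p: "chain A p" "length p = k" "S (hd p)" "\<tau> = last p"
    by (rule E_memE)
  then have "\<tau> \<in> set p" using p by (auto simp: chain_def)
  then show "\<tau> \<in> {\<tau>. \<exists>p. chain A p \<and> length p = k \<and> S (hd p) \<and> \<tau> \<in> set p}" using p by blast
qed


lemma Ext_char:
  assumes sc: "simplicial_complex L"
  shows "Ext_op L X = {\<rho>\<in>L. \<exists>\<tau>\<in>L. \<rho> \<subseteq> \<tau> \<and> (\<exists>\<sigma>\<in>X. \<sigma> \<noteq> {} \<and> \<sigma> \<subseteq> \<tau>)}"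
proof -
  have cl: "\<And>\<sigma> \<tau>. \<sigma> \<in> L \<Longrightarrow> \<tau> \<noteq> {} \<Longrightarrow> \<tau> \<subseteq> \<sigma> \<Longrightarrow> \<tau> \<in> L"
    using sc unfolding simplicial_complex_def by blast
  have "gamma_op L (delta_op L (gamma_op L X)) = {\<rho>\<in>L. \<exists>\<sigma>\<in>X. \<sigma> \<noteq> {} \<and> \<sigma> \<subseteq> \<rho>}"
    unfolding gamma_op_def delta_op_def using cl by blast
  then show ?thesis unfolding Ext_op_def Delta_op_def by auto
qed

lemma Int_char:
  assumes sc: "simplicial_complex L"
  shows "gamma_op L (Int_op L X) = {\<rho>\<in>L. \<exists>\<sigma>\<in>gamma_op L X. \<rho> \<inter> \<sigma> \<noteq> {}}"
proof (intro set_eqI iffI)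
  have cl: "\<And>\<sigma> \<tau>. \<sigma> \<in> L \<Longrightarrow> \<tau> \<noteq> {} \<Longrightarrow> \<tau> \<subseteq> \<sigma> \<Longrightarrow> \<tau> \<in> L"
    using sc unfolding simplicial_complex_def by blast
  fix \<rho>
  {
    show "\<rho> \<in> gamma_op L (Int_op L X) \<Longrightarrow> \<rho> \<in> {\<rho>\<in>L. \<exists>\<sigma>\<in>gamma_op L X. \<rho> \<inter> \<sigma> \<noteq> {}}"
    proof -
      assume r: "\<rho> \<in> gamma_op L (Int_op L X)"
      then have rL: "\<rho> \<in> L" by (simp add: gamma_op_def)
      from r obtain \<tau> where t: "\<tau> \<noteq> {}" "\<tau> \<subseteq> \<rho>" "\<tau> \<notin> L - Delta_op L (L - X)"
        unfolding Int_op_def gamma_op_def delta_op_def by auto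
      have "\<tau> \<in> L" using cl[OF rL t(1,2)] .
      with t(3) obtain \<sigma> where s: "\<sigma> \<in> L - X" "\<tau> \<subseteq> \<sigma>" unfolding Delta_op_def by blast
      obtain x where "x \<in> \<tau>" using t(1) by blast
      then have "\<rho> \<inter> \<sigma> \<noteq> {}" using t(2) s(2) by blast
      then show ?thesis using rL s(1) unfolding gamma_op_def by blast
    qed
  }
  {
    assume a: "\<rho> \<in> {\<rho>\<in>L. \<exists>\<sigma>\<in>gamma_op L X. \<rho> \<inter> \<sigma> \<noteq> {}}"
    then obtain \<sigma> x where s: "\<rho> \<in> L" "\<sigma> \<in> L" "\<sigma> \<notin> X" "x \<in> \<rho>" "x \<in> \<sigma>"
      unfolding gamma_op_def by blast
    have "{x} \<in> L" using cl[OF s(1), of "{x}"] s by auto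
    then have d: "{x} \<in> Delta_op L (L - X)" unfolding Delta_op_def using s by blast
    have "\<rho> \<notin> delta_op L (L - Delta_op L (L - X))"
      unfolding delta_op_def using d s(4) by blast
    then show "\<rho> \<in> gamma_op L (Int_op L X)"
      unfolding Int_op_def gamma_op_def using s(1) by simp
  }
qed

lemma exists_max:
  assumes sc: "simplicial_complex L" and "\<sigma> \<in> L"
  shows "\<exists>\<mu>\<in>max_faces L. \<sigma> \<subseteq> \<mu>"
proof -
  have "finite L" using sc by (simp add: simplicial_complex_def)
  from finite_has_maximal2[OF this assms(2)] obtain m where
    "m \<in> L" "\<sigma> \<subseteq> m" "\<forall>b\<in>L. m \<subseteq> b \<longrightarrow> m = b" by blast
  then show ?thesis unfolding max_faces_def by auto
qed

lemma Ext_one: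
  assumes sc: "simplicial_complex L" and HL: "H \<subseteq> L"
  shows "max_faces L \<inter> Ext_op L H = {\<tau>\<in>max_faces L. \<exists>\<sigma>\<in>H. \<sigma> \<subseteq> \<tau>}"
proof -
  have ne: "\<forall>\<sigma>\<in>L. \<sigma> \<noteq> {}" using sc by (simp add: simplicial_complex_def)
  have mL: "max_faces L \<subseteq> L" by (auto simp: max_faces_def)
  show ?thesis
  proof (intro set_eqI iffI)
    fix \<tau> assume "\<tau> \<in> max_faces L \<inter> Ext_op L H"
    then obtain \<tau>' \<sigma> where t: "\<tau> \<in> max_faces L" "\<tau>' \<in> L" "\<tau> \<subseteq> \<tau>'" "\<sigma> \<in> H" "\<sigma> \<subseteq> \<tau>'"
      unfolding Ext_char[OF sc] by blast
    have "\<tau>' = \<tau>" using t(1-3) by (auto simp: max_faces_def)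
    then show "\<tau> \<in> {\<tau>\<in>max_faces L. \<exists>\<sigma>\<in>H. \<sigma> \<subseteq> \<tau>}" using t by blast
  next
    fix \<tau> assume "\<tau> \<in> {\<tau>\<in>max_faces L. \<exists>\<sigma>\<in>H. \<sigma> \<subseteq> \<tau>}"
    then obtain \<sigma> where t: "\<tau> \<in> max_faces L" "\<sigma> \<in> H" "\<sigma> \<subseteq> \<tau>" by blast
    have "\<sigma> \<noteq> {}" using t(2) HL ne by blast
    moreover have "\<tau> \<in> L" using t(1) mL by blast
    ultimately have "\<tau> \<in> Ext_op L H" unfolding Ext_char[OF sc] using t by blast
    then show "\<tau> \<in> max_faces L \<inter> Ext_op L H" using t(1) by blast
  qed
qed

lemma Ext_step:
  assumes sc: "simplicial_complex L"
  shows "max_faces L \<inter> Ext_op L (Ext_op L Y) =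
     {\<tau>\<in>max_faces L. \<exists>\<mu>\<in>max_faces L \<inter> Ext_op L Y. \<mu> \<inter> \<tau> \<noteq> {}}"
proof (intro set_eqI iffI)
  have cl: "\<And>\<sigma> \<tau>. \<sigma> \<in> L \<Longrightarrow> \<tau> \<noteq> {} \<Longrightarrow> \<tau> \<subseteq> \<sigma> \<Longrightarrow> \<tau> \<in> L"
    using sc unfolding simplicial_complex_def by blast
  have mL: "max_faces L \<subseteq> L" by (auto simp: max_faces_def)
  fix \<tau>
  {
    assume "\<tau> \<in> max_faces L \<inter> Ext_op L (Ext_op L Y)"
    then obtain \<tau>' \<sigma> where t: "\<tau> \<in> max_faces L" "\<tau>' \<in> L" "\<tau> \<subseteq> \<tau>'" "\<sigma> \<in> Ext_op L Y"
      "\<sigma> \<noteq> {}" "\<sigma> \<subseteq> \<tau>'"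
      unfolding Ext_char[OF sc, of "Ext_op L Y"] by blast
    have "\<tau>' = \<tau>" using t(1-3) by (auto simp: max_faces_def)
    obtain \<nu> y where n: "\<nu> \<in> L" "\<sigma> \<subseteq> \<nu>" "y \<in> Y" "y \<noteq> {}" "y \<subseteq> \<nu>"
      using t(4) unfolding Ext_char[OF sc, of Y] by blast
    obtain \<mu> where m: "\<mu> \<in> max_faces L" "\<nu> \<subseteq> \<mu>" using exists_max[OF sc n(1)] by blast
    have "\<mu> \<in> Ext_op L Y" unfolding Ext_char[OF sc, of Y] using m n mL by blast
    moreover have "\<mu> \<inter> \<tau> \<noteq> {}" using \<open>\<tau>' = \<tau>\<close> t n m by blast
    ultimately show "\<tau> \<in> {\<tau>\<in>max_faces L. \<exists>\<mu>\<in>max_faces L \<inter> Ext_op L Y. \<mu> \<inter> \<tau> \<noteq> {}}"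
      using m t(1) by blast
  }
  {
    assume "\<tau> \<in> {\<tau>\<in>max_faces L. \<exists>\<mu>\<in>max_faces L \<inter> Ext_op L Y. \<mu> \<inter> \<tau> \<noteq> {}}"
    then obtain \<mu> where m: "\<tau> \<in> max_faces L" "\<mu> \<in> Ext_op L Y" "\<mu> \<inter> \<tau> \<noteq> {}" by blast
    obtain \<nu> y where n: "\<nu> \<in> L" "\<mu> \<subseteq> \<nu>" "y \<in> Y" "y \<noteq> {}" "y \<subseteq> \<nu>"
      using m(2) unfolding Ext_char[OF sc, of Y] by blast
    have tL: "\<tau> \<in> L" using m(1) mL by blast
    have "\<mu> \<inter> \<tau> \<in> L" using cl[OF tL, of "\<mu> \<inter> \<tau>"] m(3) by blast
    then have e: "\<mu> \<inter> \<tau> \<in> Ext_op L Y" unfolding Ext_char[OF sc, of Y] using n by blast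
    have "\<exists>\<tau>'\<in>L. \<tau> \<subseteq> \<tau>' \<and> (\<exists>\<sigma>\<in>Ext_op L Y. \<sigma> \<noteq> {} \<and> \<sigma> \<subseteq> \<tau>')"
      using tL e m(3) by (intro bexI[of _ \<tau>] conjI bexI[of _ "\<mu> \<inter> \<tau>"]) auto
    then have "\<tau> \<in> Ext_op L (Ext_op L Y)" unfolding Ext_char[OF sc, of "Ext_op L Y"] using tL by simp
    then show "\<tau> \<in> max_faces L \<inter> Ext_op L (Ext_op L Y)" using m(1) by simp
  }
qed

lemma partA:
  assumes sc: "simplicial_complex L" and HL: "H \<subseteq> L"
  shows "max_faces L \<inter> (Ext_op L ^^ Suc n) H = E (max_faces L) (\<lambda>h. \<exists>\<sigma>\<in>H. \<sigma> \<subseteq> h) (Suc n)"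
proof (induction n)
  case 0
  then show ?case using Ext_one[OF sc HL] by (simp add: E_one)
next
  case (Suc n)
  have "max_faces L \<inter> (Ext_op L ^^ Suc (Suc n)) H
     = max_faces L \<inter> Ext_op L (Ext_op L ((Ext_op L ^^ n) H))" by simp
  also have "\<dots> = {\<tau>\<in>max_faces L. \<exists>\<mu>\<in>max_faces L \<inter> (Ext_op L ^^ Suc n) H. \<mu> \<inter> \<tau> \<noteq> {}}"
    using Ext_step[OF sc] by simp
  also have "\<dots> = E (max_faces L) (\<lambda>h. \<exists>\<sigma>\<in>H. \<sigma> \<subseteq> h) (Suc (Suc n))"
    unfolding E_step Suc.IH[symmetric] by blast
  finally show ?case .
qed

lemma partB:
  assumes sc: "simplicial_complex L"
  shows "gamma_op L ((Int_op L ^^ Suc n) H) = E L (\<lambda>h. \<exists>\<sigma>'\<in>gamma_op L H. h \<inter> \<sigma>' \<noteq> {}) (Suc n)"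
proof (induction n)
  case 0
  then show ?case using Int_char[OF sc] by (simp add: E_one)
next
  case (Suc n)
  have "gamma_op L ((Int_op L ^^ Suc (Suc n)) H)
     = {\<rho>\<in>L. \<exists>\<sigma>\<in>gamma_op L ((Int_op L ^^ Suc n) H). \<rho> \<inter> \<sigma> \<noteq> {}}"
    using Int_char[OF sc] by simp
  also have "\<dots> = E L (\<lambda>h. \<exists>\<sigma>'\<in>gamma_op L H. h \<inter> \<sigma>' \<noteq> {}) (Suc (Suc n))"
    unfolding E_step Suc.IH[symmetric] by blast
  finally show ?case .
qed

theorem lemma3p3:
  fixes L H :: "'a set set" and k :: nat
  assumes "simplicial_complex L" and "H \<subseteq> L" and "k \<ge> 1"
  shows "(H \<noteq> {} \<longrightarrow>
           max_faces L \<inter> (Ext_op L ^^ k) H =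
             {\<tau>. \<exists>p. is_broad_path L p \<and> length p = k \<and>
                  (\<exists>\<sigma>\<in>H. \<sigma> \<subseteq> hd p) \<and> \<tau> \<in> set p})
       \<and> (H \<noteq> L \<longrightarrow>
           gamma_op L ((Int_op L ^^ k) H) =
             {\<tau>. \<exists>p. is_path L p \<and> length p = k \<and>
                  (\<exists>\<sigma>'\<in>gamma_op L H. hd p \<inter> \<sigma>' \<noteq> {}) \<and> \<tau> \<in> set p})"
proof -
  obtain n where k: "k = Suc n" using assms(3) by (cases k) auto
  have ne: "\<forall>x\<in>L. x \<noteq> {}" using assms(1) by (simp add: simplicial_complex_def)
  have mL: "max_faces L \<subseteq> L" by (auto simp: max_faces_def)
  have neM: "\<forall>x\<in>max_faces L. x \<noteq> {}" using ne mL by blast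
  have bp: "\<And>p. is_broad_path L p \<longleftrightarrow> chain (max_faces L) p"
    unfolding is_broad_path_def is_path_def chain_def using mL by blast
  have pp: "\<And>p. is_path L p \<longleftrightarrow> chain L p"
    unfolding is_path_def chain_def by blast
  have A: "{\<tau>. \<exists>p. is_broad_path L p \<and> length p = k \<and> (\<exists>\<sigma>\<in>H. \<sigma> \<subseteq> hd p) \<and> \<tau> \<in> set p}
     = E (max_faces L) (\<lambda>h. \<exists>\<sigma>\<in>H. \<sigma> \<subseteq> h) k"
    unfolding bp using E_set[OF neM, of k "\<lambda>h. \<exists>\<sigma>\<in>H. \<sigma> \<subseteq> h"] by simp
  have B: "{\<tau>. \<exists>p. is_path L p \<and> length p = k \<and>
                  (\<exists>\<sigma>'\<in>gamma_op L H. hd p \<inter> \<sigma>' \<noteq> {}) \<and> \<tau> \<in> set p}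
     = E L (\<lambda>h. \<exists>\<sigma>'\<in>gamma_op L H. h \<inter> \<sigma>' \<noteq> {}) k"
    unfolding pp using E_set[OF ne, of k "\<lambda>h. \<exists>\<sigma>'\<in>gamma_op L H. h \<inter> \<sigma>' \<noteq> {}"] by simp
  have C1: "max_faces L \<inter> (Ext_op L ^^ k) H = E (max_faces L) (\<lambda>h. \<exists>\<sigma>\<in>H. \<sigma> \<subseteq> h) k"
    using partA[OF assms(1,2), of n] k by simp
  have C2: "gamma_op L ((Int_op L ^^ k) H) = E L (\<lambda>h. \<exists>\<sigma>'\<in>gamma_op L H. h \<inter> \<sigma>' \<noteq> {}) k"
    using partB[OF assms(1), of n H] k by simp
  show ?thesis unfolding A B C1 C2 by (rule conjI; rule impI; rule refl)
qed

end
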